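(* Assume the scatter-step setting and then a gather step: set $\lambda_j=\theta_j-\eta G_j$ for $j=1,\dots,h_{ps}$, and let each correct server $j$ compute $\theta'_j=\mathrm{Median}\big(\lambda_j,(\lambda_k)_{k\in X_j},z^{(j)}_1,\dots,z^{(j)}_{q_{ps}-1-|X_j|}\big)$, where $X=(X_1,\dots,X_{h_{ps}})$ is a random delivering configuration independent of the gradient randomness with $P(X=s)\ge\rho>0$ for all $s\in S$, and the $z^{(j)}$ are arbitrary (possibly depending on everything). Assume $f_{ps}\ge1$, $h_{ps}=n_{ps}-f_{ps}$ and $2f_{ps}+2\le q_{ps}\le\lfloor h_{ps}/2\rfloor$. Then $$\mathbb{E}\big[\Delta(\theta'_1,\dots,\theta'_{h_{ps}})\big]\le\Big(1+3d\eta l-\frac{\rho}{4}\Big)\Delta(\theta_1,\dots,\theta_{h_{ps}})+6d\eta h_w\sigma'.$$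
   Context: Median of reals: order statistics $y_{(1)}\le\dots\le y_{(q)}$; median $=y_{((q+1)/2)}$ for odd $q$, $\frac12(y_{(q/2)}+y_{(q/2+1)})$ for even $q$; $\mathrm{Median}$ of vectors coordinate-wise. Coordinate-wise diameters: $\Delta_i(v_1,\dots,v_h)=\max_{j,k}|v_j[i]-v_k[i]|$, $\Delta=\sum_{i=1}^d\Delta_i$. Minimum–Diameter Averaging: for $f\ge0$, $q\ge2f+1$, $\mathrm{MDA}_f(x_1,\dots,x_q)$ is the average of the $x_i$, $i\in I^*$, where $I^*$ is an index set of size $q-f$ minimizing $\max_{i,j\in I}\|x_i-x_j\|_2$ (ties arbitrary). Scatter-step setting: $L:\mathbb{R}^d\to\mathbb{R}$ differentiable with $l$-Lipschitz gradient; $\eta>0$; correct server parameters $\theta_1,\dots,\theta_{h_{ps}}\in\mathbb{R}^d$; correct workers' models $x_1,\dots,x_{h_w}$ with $\min_k\theta_k[i]\le x_r[i]\le\max_k\theta_k[i]$ for all $i,r$; random gradients $g_1,\dots,g_{h_w}$ with $\mathbb{E}\|g_r-\nabla L(x_r)\|_2\le\sigma'$; integers $f_w\ge1$, $q_w\ge2f_w+1$; each correct server $j$ computes $G_j=\mathrm{MDA}_{f_w}$ of a list of $q_w$ vectors, at least $q_w-f_w$ of which belong to $\{g_1,\dots,g_{h_w}\}$. Delivering configurations: $S_j=\{s\subset\{1,\dots,h_{ps}\}\setminus\{j\}:|s|\in\{q_{ps}-f_{ps}-1,\dots,q_{ps}-1\}\}$, $S=\prod_jS_j$. *)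

theory Defs
  imports "HOL-Probability.Probability"
begin

definition median :: "real list \<Rightarrow> real" where
  "median ys = (let zs = sort ys; q = length ys in
     if odd q then zs ! (q div 2) else (zs ! (q div 2 - 1) + zs ! (q div 2)) / 2)"

definition vmedian :: "(real ^ 'd) list \<Rightarrow> real ^ 'd" where
  "vmedian vs = (\<chi> i. median (map (\<lambda>v. v $ i) vs))"

definition coord_diam :: "nat \<Rightarrow> (nat \<Rightarrow> real ^ 'd) \<Rightarrow> 'd \<Rightarrow> real" where
  "coord_diam h v i = Max {\<bar>v j $ i - v k $ i\<bar> | j k. j < h \<and> k < h}"

definition Delta :: "nat \<Rightarrow> (nat \<Rightarrow> real ^ 'd) \<Rightarrow> real" where
  "Delta h v = (\<Sum>i\<in>UNIV. coord_diam h v i)"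

definition idx_diam :: "('a::real_normed_vector) list \<Rightarrow> nat set \<Rightarrow> real" where
  "idx_diam xs I = Max {norm (xs ! i - xs ! j) | i j. i \<in> I \<and> j \<in> I}"

text \<open>v is a possible output of MDA_f on the list xs (ties broken arbitrarily).\<close>
definition is_MDA :: "nat \<Rightarrow> ('a::real_normed_vector) list \<Rightarrow> 'a \<Rightarrow> bool" where
  "is_MDA f xs v \<longleftrightarrow>
     (\<exists>I. I \<subseteq> {..<length xs} \<and> card I = length xs - f \<and>
        (\<forall>J. J \<subseteq> {..<length xs} \<and> card J = length xs - f \<longrightarrow> idx_diam xs I \<le> idx_diam xs J) \<and>
        v = (1 / real (length xs - f)) *\<^sub>R (\<Sum>i\<in>I. xs ! i))"

definition deliv_S_j :: "nat \<Rightarrow> nat \<Rightarrow> nat \<Rightarrow> nat \<Rightarrow> nat set set" where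
  "deliv_S_j hps qps fps j =
     {s. s \<subseteq> {..<hps} - {j} \<and> card s \<in> {qps - fps - 1 .. qps - 1}}"

definition deliv_S :: "nat \<Rightarrow> nat \<Rightarrow> nat \<Rightarrow> (nat \<Rightarrow> nat set) set" where
  "deliv_S hps qps fps = PiE {..<hps} (deliv_S_j hps qps fps)"

end

theory Submission
  imports Defs
begin

lemma sort_le_bound:
  fixes ys :: "real list"
  assumes "k < length (filter (\<lambda>y. y \<le> a) ys)"
  shows "sort ys ! k \<le> a"
proof (rule ccontr)
  let ?zs = "sort ys"
  assume "\<not> ?zs ! k \<le> a"
  hence ka: "?zs ! k > a" by simp
  have lf: "length (filter (\<lambda>y. y \<le> a) ?zs) = length (filter (\<lambda>y. y \<le> a) ys)"
    by (metis mset_filter mset_sort size_mset)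
  have kl: "k < length ?zs" using assms
    by (metis length_filter_le length_sort order_less_le_trans)
  have "\<forall>y\<in>set (drop k ?zs). y > a"
  proof
    fix y assume "y \<in> set (drop k ?zs)"
    then obtain j where j: "j < length (drop k ?zs)" "y = drop k ?zs ! j" by (auto simp: in_set_conv_nth)
    hence "y = ?zs ! (k + j)" by simp
    moreover have "?zs ! k \<le> ?zs ! (k+j)" using j by (intro sorted_nth_mono) auto
    ultimately show "y > a" using ka by simp
  qed
  hence "filter (\<lambda>y. y \<le> a) (drop k ?zs) = []" by (force simp add: filter_empty_conv)
  hence "length (filter (\<lambda>y. y \<le> a) ?zs) = length (filter (\<lambda>y. y \<le> a) (take k ?zs))"
    by (metis append_Nil2 append_take_drop_id filter_append)
  also have "\<dots> \<le> k" using kl by (metis length_filter_le length_take min.absorb2 less_imp_le)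
  finally show False using assms lf by simp
qed

lemma sort_ge_bound:
  fixes ys :: "real list"
  assumes "length ys - length (filter (\<lambda>y. b \<le> y) ys) \<le> k" "k < length ys"
  shows "b \<le> sort ys ! k"
proof (rule ccontr)
  let ?zs = "sort ys"
  assume "\<not> b \<le> ?zs ! k"
  hence ka: "?zs ! k < b" by simp
  have lf: "length (filter (\<lambda>y. b \<le> y) ?zs) = length (filter (\<lambda>y. b \<le> y) ys)"
    by (metis mset_filter mset_sort size_mset)
  have kl: "k < length ?zs" using assms by simp
  have "\<forall>y\<in>set (take (Suc k) ?zs). y < b"
  proof
    fix y assume "y \<in> set (take (Suc k) ?zs)"
    then obtain j where j: "j < length (take (Suc k) ?zs)" "y = take (Suc k) ?zs ! j" by (auto simp: in_set_conv_nth)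
    hence "y = ?zs ! j" "j \<le> k" by auto
    moreover have "?zs ! j \<le> ?zs ! k" using j kl by (intro sorted_nth_mono) auto
    ultimately show "y < b" using ka by simp
  qed
  hence "filter (\<lambda>y. b \<le> y) (take (Suc k) ?zs) = []" by (force simp add: filter_empty_conv)
  hence "length (filter (\<lambda>y. b \<le> y) ?zs) = length (filter (\<lambda>y. b \<le> y) (drop (Suc k) ?zs))"
    by (metis append_Nil append_take_drop_id filter_append)
  also have "\<dots> \<le> length ?zs - Suc k" by (metis length_filter_le length_drop)
  finally show False using assms lf kl by simp
qed

lemma median_le:
  fixes ys :: "real list"
  assumes "length (filter (\<lambda>y. y \<le> a) ys) \<ge> length ys div 2 + 1"
  shows "median ys \<le> a"
proof -
  let ?q = "length ys"
  have "sort ys ! (?q div 2) \<le> a" using assms by (intro sort_le_bound) simp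
  moreover have "?q div 2 \<ge> 1 \<Longrightarrow> sort ys ! (?q div 2 - 1) \<le> a" using assms by (intro sort_le_bound) simp
  moreover have "even ?q \<Longrightarrow> ?q > 0 \<Longrightarrow> ?q div 2 \<ge> 1" by presburger
  moreover have "?q > 0" using assms by (metis add_eq_0_iff_both_eq_0 gr0I le_zero_eq length_0_conv filter.simps(1) list.size(3) one_neq_zero)
  ultimately show ?thesis unfolding median_def Let_def by auto
qed

lemma median_ge:
  fixes ys :: "real list"
  assumes "length (filter (\<lambda>y. b \<le> y) ys) \<ge> length ys div 2 + 1"
  shows "b \<le> median ys"
proof -
  let ?q = "length ys"
  have lq: "length (filter (\<lambda>y. b \<le> y) ys) \<le> ?q" by (rule length_filter_le)
  have q0: "?q > 0" using assms lq by linarith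
  have "b \<le> sort ys ! (?q div 2)" using assms q0 lq by (intro sort_ge_bound) auto
  moreover have "even ?q \<Longrightarrow> b \<le> sort ys ! (?q div 2 - 1)" using assms q0 lq
    by (intro sort_ge_bound) (use q0 in \<open>auto elim!: evenE simp: Suc_le_eq simp del: length_greater_0_conv\<close>)
  ultimately show ?thesis unfolding median_def Let_def by auto
qed

lemma median_le2:
  fixes ys :: "real list"
  assumes "length (filter (\<lambda>y. y \<le> a) ys) \<ge> (length ys + 1) div 2"
    and "length (filter (\<lambda>y. y \<le> c) ys) \<ge> length ys div 2 + 1" and "a \<le> c"
  shows "median ys \<le> (a + c) / 2"
proof -
  let ?q = "length ys"
  have lq: "length (filter (\<lambda>y. y \<le> c) ys) \<le> ?q" by (rule length_filter_le)
  have q0: "?q > 0" using assms lq by linarith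
  show ?thesis
  proof (cases "even ?q")
    case True
    have p1: "?q div 2 \<ge> 1" "(?q+1) div 2 = ?q div 2" using q0 True by presburger+
    have "sort ys ! (?q div 2 - 1) \<le> a" using assms p1 by (intro sort_le_bound) linarith
    moreover have "sort ys ! (?q div 2) \<le> c" using assms by (intro sort_le_bound) simp
    ultimately show ?thesis using True unfolding median_def Let_def by auto
  next
    case False
    have "sort ys ! (?q div 2) \<le> a" using assms q0 False by (intro sort_le_bound) (auto elim!: oddE)
    thus ?thesis using False assms(3) unfolding median_def Let_def by auto
  qed
qed

lemma median_ge2:
  fixes ys :: "real list"
  assumes "length (filter (\<lambda>y. a \<le> y) ys) \<ge> (length ys + 1) div 2"
    and "length (filter (\<lambda>y. c \<le> y) ys) \<ge> length ys div 2 + 1" and "c \<le> a"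
  shows "(a + c) / 2 \<le> median ys"
proof -
  let ?q = "length ys"
  have lq: "length (filter (\<lambda>y. c \<le> y) ys) \<le> ?q" by (rule length_filter_le)
  have lq2: "length (filter (\<lambda>y. a \<le> y) ys) \<le> ?q" by (rule length_filter_le)
  have q0: "?q > 0" using assms lq by linarith
  show ?thesis
  proof (cases "even ?q")
    case True
    have "c \<le> sort ys ! (?q div 2 - 1)" using assms q0 True lq by (intro sort_ge_bound) (use q0 in \<open>auto elim!: evenE simp: Suc_le_eq simp del: length_greater_0_conv\<close>)
    moreover have "a \<le> sort ys ! (?q div 2)" using assms q0 True lq2 by (intro sort_ge_bound) (use q0 in \<open>auto elim!: evenE simp: Suc_le_eq simp del: length_greater_0_conv\<close>)
    ultimately show ?thesis using True unfolding median_def Let_def by auto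
  next
    case False
    have "a \<le> sort ys ! (?q div 2)" using assms q0 False lq2 by (intro sort_ge_bound) (auto elim!: oddE)
    thus ?thesis using False assms(3) unfolding median_def Let_def by auto
  qed
qed

lemma count_list_ge:
  assumes "finite S"
  shows "length (filter P (x # map v (sorted_list_of_set S) @ zs)) \<ge> of_bool (P x) + card {k\<in>S. P (v k)}"
proof -
  have "length (filter P (map v (sorted_list_of_set S))) = length (filter (P \<circ> v) (sorted_list_of_set S))"
    by (simp add: filter_map)
  also have "\<dots> = card (set (filter (P \<circ> v) (sorted_list_of_set S)))"
    by (rule distinct_card[OF distinct_filter[OF distinct_sorted_list_of_set], symmetric])
  also have "\<dots> = card {k\<in>S. P (v k)}" using assms by (simp add: Collect_conj_eq Int_commute set_filter)
  finally show ?thesis by simp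
qed

lemma card_deliv:
  assumes "s \<in> deliv_S hps qps fps" "j < hps"
  shows "s j \<subseteq> {..<hps} - {j}" "qps - fps - 1 \<le> card (s j)" "card (s j) \<le> qps - 1" "finite (s j)"
  using assms unfolding deliv_S_def deliv_S_j_def PiE_def Pi_def
  by (auto intro: finite_subset)

lemma core:
  fixes v :: "nat \<Rightarrow> real" and s :: "nat \<Rightarrow> nat set" and zz :: "real list"
  assumes sS: "s \<in> deliv_S hps qps fps" and q: "2*fps+2 \<le> qps" and j: "j < hps"
    and len: "length zz = qps - 1 - card (s j)"
  defines "m \<equiv> Min (v ` {..<hps})" and "Mx \<equiv> Max (v ` {..<hps})"
  defines "ys \<equiv> v j # map v (sorted_list_of_set (s j)) @ zz"
  shows "m \<le> median ys" "median ys \<le> Mx"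
    "(\<forall>j<hps. \<forall>k\<in>s j. 2 * v k \<le> m + Mx) \<Longrightarrow> median ys \<le> (m + 3*Mx)/4"
    "(\<forall>j<hps. \<forall>k\<in>s j. 2 * v k \<ge> m + Mx) \<Longrightarrow> median ys \<ge> (3*m + Mx)/4"
proof -
  note cd = card_deliv[OF sS j]
  have lys: "length ys = qps" unfolding ys_def using len cd q by simp
  have fin: "finite {..<hps}" by simp
  have mle: "\<And>k. k < hps \<Longrightarrow> m \<le> v k" unfolding m_def using fin by (intro Min_le) auto
  have Mge: "\<And>k. k < hps \<Longrightarrow> v k \<le> Mx" unfolding Mx_def using fin by (intro Max_ge) auto
  have sub: "\<And>k. k \<in> s j \<Longrightarrow> k < hps" using cd(1) by auto
  have c1: "length (filter P ys) \<ge> 1 + card (s j)" if "P (v j)" "\<And>k. k\<in>s j \<Longrightarrow> P (v k)" for P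
  proof -
    have "{k\<in>s j. P (v k)} = s j" using that by auto
    thus ?thesis using count_list_ge[OF cd(4), of P "v j" v zz] that unfolding ys_def by simp
  qed
  have c2: "length (filter P ys) \<ge> card (s j)" if "\<And>k. k\<in>s j \<Longrightarrow> P (v k)" for P
  proof -
    have "{k\<in>s j. P (v k)} = s j" using that by auto
    thus ?thesis using count_list_ge[OF cd(4), of P "v j" v zz] that unfolding ys_def by simp
  qed
  have big: "1 + card (s j) \<ge> qps div 2 + 1" using cd q by linarith
  have big2: "card (s j) \<ge> (qps + 1) div 2" using cd q by linarith
  show "m \<le> median ys"
    by (rule median_ge) (use c1[of "\<lambda>y. m \<le> y"] mle sub big lys j in auto)
  show "median ys \<le> Mx"
    by (rule median_le) (use c1[of "\<lambda>y. y \<le> Mx"] Mge sub big lys j in auto)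
  show "median ys \<le> (m + 3*Mx)/4" if H: "\<forall>j<hps. \<forall>k\<in>s j. 2 * v k \<le> m + Mx"
  proof -
    have mM: "m \<le> Mx" using mle Mge j by force
    have cc: "length (filter (\<lambda>y. y \<le> (m+Mx)/2) ys) \<ge> card (s j)" by (rule c2) (use H j in \<open>auto simp: mult.commute\<close>)
    have "median ys \<le> ((m+Mx)/2 + Mx)/2"
      by (rule median_le2) (use c1[of "\<lambda>y. y \<le> Mx"] cc Mge sub big big2 lys j mM in auto)
    thus ?thesis by (simp add: field_simps)
  qed
  show "median ys \<ge> (3*m + Mx)/4" if H: "\<forall>j<hps. \<forall>k\<in>s j. 2 * v k \<ge> m + Mx"
  proof -
    have mM: "m \<le> Mx" using mle Mge j by force
    have cc: "length (filter (\<lambda>y. (m+Mx)/2 \<le> y) ys) \<ge> card (s j)" by (rule c2) (use H j in \<open>auto simp: mult.commute\<close>)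
    have "((m+Mx)/2 + m)/2 \<le> median ys"
      by (rule median_ge2) (use c1[of "\<lambda>y. m \<le> y"] cc mle sub big big2 lys j mM in auto)
    thus ?thesis by (simp add: field_simps)
  qed
qed

definition cmin :: "nat \<Rightarrow> (nat \<Rightarrow> real ^ 'd) \<Rightarrow> 'd \<Rightarrow> real" where
  "cmin h v i = Min ((\<lambda>k. v k $ i) ` {..<h})"
definition cmax :: "nat \<Rightarrow> (nat \<Rightarrow> real ^ 'd) \<Rightarrow> 'd \<Rightarrow> real" where
  "cmax h v i = Max ((\<lambda>k. v k $ i) ` {..<h})"
definition good :: "nat \<Rightarrow> (nat \<Rightarrow> real ^ 'd) \<Rightarrow> 'd \<Rightarrow> (nat \<Rightarrow> nat set) \<Rightarrow> bool" where
  "good h v i s = ((\<forall>j\<in>{..<h}. \<forall>k\<in>s j. 2 * (v k $ i) \<le> cmin h v i + cmax h v i) \<or>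
                   (\<forall>j\<in>{..<h}. \<forall>k\<in>s j. 2 * (v k $ i) \<ge> cmin h v i + cmax h v i))"

lemma cd_set_eq: "{\<bar>v j $ i - v k $ i\<bar> | j k. j < h \<and> k < h} = (\<lambda>(j,k). \<bar>v j $ i - v k $ i\<bar>) ` ({..<h} \<times> {..<h})"
  by auto

lemma cd_ge: "j < h \<Longrightarrow> k < h \<Longrightarrow> \<bar>v j $ i - v k $ i\<bar> \<le> coord_diam h v i"
  unfolding coord_diam_def cd_set_eq by (rule Max_ge) auto

lemma cd_le: "0 < h \<Longrightarrow> (\<And>j k. j < h \<Longrightarrow> k < h \<Longrightarrow> \<bar>v j $ i - v k $ i\<bar> \<le> c) \<Longrightarrow> coord_diam h v i \<le> c"
  unfolding coord_diam_def cd_set_eq by (subst Max_le_iff) auto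

lemma cd_nonneg: "0 < h \<Longrightarrow> 0 \<le> coord_diam h v i"
  using cd_ge[of 0 h 0 v i] by simp

lemma cmin_le: "k < h \<Longrightarrow> cmin h v i \<le> v k $ i"
  unfolding cmin_def by (rule Min_le) auto
lemma cmax_ge: "k < h \<Longrightarrow> v k $ i \<le> cmax h v i"
  unfolding cmax_def by (rule Max_ge) auto
lemma cmin_in: "0 < h \<Longrightarrow> \<exists>k<h. cmin h v i = v k $ i"
  unfolding cmin_def using Min_in[of "(\<lambda>k. v k $ i) ` {..<h}"] by (metis (no_types, lifting) empty_iff finite_imageI finite_lessThan image_iff image_is_empty lessThan_iff)
lemma cmax_in: "0 < h \<Longrightarrow> \<exists>k<h. cmax h v i = v k $ i"
  unfolding cmax_def using Max_in[of "(\<lambda>k. v k $ i) ` {..<h}"] by (metis (no_types, lifting) empty_iff finite_imageI finite_lessThan image_iff image_is_empty lessThan_iff)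

lemma cd_eq: "0 < h \<Longrightarrow> coord_diam h v i = cmax h v i - cmin h v i"
proof (rule antisym)
  assume h: "0 < h"
  show "coord_diam h v i \<le> cmax h v i - cmin h v i"
    by (rule cd_le[OF h]) (smt (verit) cmax_ge cmin_le)
  obtain a b where "a < h" "b < h" "cmin h v i = v a $ i" "cmax h v i = v b $ i"
    using cmin_in[OF h] cmax_in[OF h] by metis
  thus "cmax h v i - cmin h v i \<le> coord_diam h v i"
    using cd_ge[of b h a v i] by simp
qed

lemma coord_contract:
  fixes lam :: "nat \<Rightarrow> real ^ 'd" and s :: "nat \<Rightarrow> nat set" and zz :: "nat \<Rightarrow> (real ^ 'd) list"
  assumes sS: "s \<in> deliv_S hps qps fps" and q: "2*fps+2 \<le> qps" and h: "0 < hps"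
    and len: "\<And>j. j < hps \<Longrightarrow> length (zz j) = qps - 1 - card (s j)"
  shows "coord_diam hps (\<lambda>j. vmedian (lam j # map lam (sorted_list_of_set (s j)) @ zz j)) i
          \<le> coord_diam hps lam i - (if good hps lam i s then coord_diam hps lam i / 4 else 0)"
proof -
  define v where "v k = lam k $ i" for k
  define med where "med j = median (v j # map v (sorted_list_of_set (s j)) @ map (\<lambda>u. u $ i) (zz j))" for j
  have medeq: "vmedian (lam j # map lam (sorted_list_of_set (s j)) @ zz j) $ i = med j" for j
    unfolding vmedian_def med_def v_def by (simp add: comp_def)
  have mn: "cmin hps lam i = Min (v ` {..<hps})" and mx: "cmax hps lam i = Max (v ` {..<hps})"
    unfolding cmin_def cmax_def v_def by simp_all
  have co: "cmin hps lam i \<le> med j \<and> med j \<le> cmax hps lam i \<and>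
      ((\<forall>j<hps. \<forall>k\<in>s j. 2 * v k \<le> cmin hps lam i + cmax hps lam i) \<longrightarrow> med j \<le> (cmin hps lam i + 3*cmax hps lam i)/4) \<and>
      ((\<forall>j<hps. \<forall>k\<in>s j. 2 * v k \<ge> cmin hps lam i + cmax hps lam i) \<longrightarrow> med j \<ge> (3*cmin hps lam i + cmax hps lam i)/4)"
    if "j < hps" for j
  proof -
    have "length (map (\<lambda>u. u $ i) (zz j)) = qps - 1 - card (s j)" using len[OF that] by simp
    note c = core[OF sS q that this, where v=v, folded mn mx]
    show ?thesis unfolding med_def using c by blast
  qed
  have b1: "cmin hps lam i \<le> med j" "med j \<le> cmax hps lam i" if "j < hps" for j
    using co[OF that] by auto
  show ?thesis
  proof (cases "good hps lam i s")
    case False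
    have "coord_diam hps (\<lambda>j. vmedian (lam j # map lam (sorted_list_of_set (s j)) @ zz j)) i \<le> cmax hps lam i - cmin hps lam i"
      by (rule cd_le[OF h], unfold medeq, smt (verit) b1)
    then show ?thesis unfolding cd_eq[OF h, of lam] using False by simp
  next
    case True
    then consider "\<forall>j<hps. \<forall>k\<in>s j. 2 * v k \<le> cmin hps lam i + cmax hps lam i"
      | "\<forall>j<hps. \<forall>k\<in>s j. 2 * v k \<ge> cmin hps lam i + cmax hps lam i"
      unfolding good_def v_def by auto
    then show ?thesis
    proof cases
      case 1
      have U: "med j \<le> (cmin hps lam i + 3 * cmax hps lam i)/4" if "j < hps" for j
        using co[OF that] 1 by auto
      have "coord_diam hps (\<lambda>j. vmedian (lam j # map lam (sorted_list_of_set (s j)) @ zz j)) i \<le> 3/4*(cmax hps lam i - cmin hps lam i)"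
        apply (rule cd_le[OF h])
        subgoal for j k using b1[of j] b1[of k] U[of j] U[of k] unfolding medeq abs_le_iff by auto
        done
      then show ?thesis unfolding cd_eq[OF h, of lam] using True by (simp add: field_simps)
    next
      case 2
      have U: "med j \<ge> (3 * cmin hps lam i + cmax hps lam i)/4" if "j < hps" for j
        using co[OF that] 2 by auto
      have "coord_diam hps (\<lambda>j. vmedian (lam j # map lam (sorted_list_of_set (s j)) @ zz j)) i \<le> 3/4*(cmax hps lam i - cmin hps lam i)"
        apply (rule cd_le[OF h])
        subgoal for j k using b1[of j] b1[of k] U[of j] U[of k] unfolding medeq abs_le_iff by auto
        done
      then show ?thesis unfolding cd_eq[OF h, of lam] using True by (simp add: field_simps)
    qed
  qed
qed

lemma config_from_set:
  assumes C: "C \<subseteq> {..<hps}" "card C \<ge> qps" and q: "qps \<ge> 1"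
  shows "\<exists>s\<in>deliv_S hps qps fps. \<forall>j<hps. s j \<subseteq> C"
proof -
  have ex: "\<exists>T. T \<subseteq> C - {j} \<and> card T = qps - 1" for j
  proof -
    have fC: "finite C" using C finite_subset by blast
    have "card (C - {j}) \<ge> qps - 1" proof -
      have "card C - 1 \<le> card (C - {j})" using fC by (simp add: card_Diff_singleton_if)
      thus ?thesis using C by linarith
    qed
    then obtain T where "T \<subseteq> C - {j}" "card T = qps - 1" by (rule obtain_subset_with_card_n)
    thus ?thesis by blast
  qed
  define s where "s j = (if j < hps then (SOME T. T \<subseteq> C - {j} \<and> card T = qps - 1) else undefined)" for j
  have sj: "s j \<subseteq> C - {j} \<and> card (s j) = qps - 1" if "j < hps" for j
    unfolding s_def using that someI_ex[OF ex[of j]] by simp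
  have "s \<in> deliv_S hps qps fps"
    unfolding deliv_S_def deliv_S_j_def
  proof (rule PiE_I)
    fix j assume "j \<in> {..<hps}"
    thus "s j \<in> {s. s \<subseteq> {..<hps} - {j} \<and> card s \<in> {qps - fps - 1..qps - 1}}"
      using sj[of j] C by auto
  next
    fix j assume "j \<notin> {..<hps}" thus "s j = undefined" unfolding s_def by simp
  qed
  moreover have "\<forall>j<hps. s j \<subseteq> C" using sj by auto
  ultimately show ?thesis by blast
qed

lemma good_exists:
  fixes v :: "nat \<Rightarrow> real ^ 'd"
  assumes q: "1 \<le> qps" "qps \<le> hps div 2"
  shows "\<exists>s\<in>deliv_S hps qps fps. good hps v i s"
proof -
  define c where "c = cmin hps v i + cmax hps v i"
  define A where "A = {k\<in>{..<hps}. 2 * (v k $ i) \<le> c}"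
  define B where "B = {k\<in>{..<hps}. 2 * (v k $ i) \<ge> c}"
  have "A \<union> B = {..<hps}" unfolding A_def B_def by auto
  hence "hps \<le> card A + card B" by (metis card_Un_le card_lessThan)
  hence "card A \<ge> qps \<or> card B \<ge> qps" using q by linarith
  thus ?thesis
  proof
    assume "card A \<ge> qps"
    then obtain s where "s \<in> deliv_S hps qps fps" "\<forall>j<hps. s j \<subseteq> A"
      using config_from_set[of A hps qps fps] q unfolding A_def by auto
    moreover hence "good hps v i s" unfolding good_def c_def[symmetric] A_def by blast
    ultimately show ?thesis by blast
  next
    assume "card B \<ge> qps"
    then obtain s where "s \<in> deliv_S hps qps fps" "\<forall>j<hps. s j \<subseteq> B"
      using config_from_set[of B hps qps fps] q unfolding B_def by auto
    moreover hence "good hps v i s" unfolding good_def c_def[symmetric] B_def by blast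
    ultimately show ?thesis by blast
  qed
qed

lemma mda_close:
  fixes ys :: "'a::real_normed_vector list"
  assumes mda: "is_MDA f ys v" and len: "length ys = q" and q: "q \<ge> 2*f+1"
    and cnt: "card {m. m < q \<and> ys ! m \<in> T} \<ge> q - f"
    and D: "\<And>a b. a \<in> T \<Longrightarrow> b \<in> T \<Longrightarrow> norm (a - b) \<le> D"
  shows "\<exists>t\<in>T. norm (v - t) \<le> D"
proof -
  define C where "C = {m. m < q \<and> ys ! m \<in> T}"
  obtain I where I: "I \<subseteq> {..<q}" "card I = q - f"
    and opt: "\<And>J. J \<subseteq> {..<q} \<Longrightarrow> card J = q - f \<Longrightarrow> idx_diam ys I \<le> idx_diam ys J"
    and v: "v = (1 / real (q - f)) *\<^sub>R (\<Sum>i\<in>I. ys ! i)"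
    using mda len unfolding is_MDA_def by auto
  have fC: "finite C" unfolding C_def by simp
  obtain J where J: "J \<subseteq> C" "card J = q - f" "finite J"
    using cnt unfolding C_def[symmetric] by (rule obtain_subset_with_card_n)
  have JC: "J \<subseteq> {..<q}" using J unfolding C_def by auto
  have fin2: "finite {norm (ys ! i - ys ! j) | i j. i \<in> K \<and> j \<in> K}" if "finite K" for K
  proof -
    have "{norm (ys ! i - ys ! j) | i j. i \<in> K \<and> j \<in> K} = (\<lambda>(i,j). norm (ys ! i - ys ! j)) ` (K \<times> K)" by auto
    thus ?thesis using that by simp
  qed
  have Jne: "J \<noteq> {}" using J q by auto
  have ne: "{norm (ys ! i - ys ! j) | i j. i \<in> J \<and> j \<in> J} \<noteq> {}" using Jne by blast
  have "idx_diam ys J \<le> D" unfolding idx_diam_def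
    using J(1,3) ne fin2[OF J(3)] D unfolding C_def by (subst Max_le_iff) auto
  hence dI: "idx_diam ys I \<le> D" using opt[OF JC J(2)] by simp
  have fI: "finite I" using I finite_subset by blast
  have "I \<inter> C \<noteq> {}"
  proof
    assume "I \<inter> C = {}"
    hence "card (I \<union> C) = card I + card C" using fI fC by (simp add: card_Un_disjoint)
    moreover have "I \<union> C \<subseteq> {..<q}" using I unfolding C_def by auto
    hence "card (I \<union> C) \<le> q" by (metis card_lessThan card_mono finite_lessThan)
    ultimately show False using I cnt q unfolding C_def by linarith
  qed
  then obtain c where c: "c \<in> I" "c \<in> C" by blast
  define t where "t = ys ! c"
  have tT: "t \<in> T" using c unfolding t_def C_def by auto
  have close: "norm (ys ! i - t) \<le> D" if "i \<in> I" for i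
  proof -
    have "norm (ys ! i - t) \<le> idx_diam ys I" unfolding idx_diam_def t_def
      using that c fin2[OF fI] by (intro Max_ge) auto
    thus ?thesis using dI by simp
  qed
  have n0: "real (q - f) > 0" using q by simp
  have "v - t = (1 / real (q - f)) *\<^sub>R (\<Sum>i\<in>I. (ys ! i - t))"
  proof -
    have cI: "real (card I) = real q - real f" using I(2) q by simp
    have "(\<Sum>i\<in>I. t) = (real q - real f) *\<^sub>R t" using cI by (simp add: sum_constant_scaleR)
    thus ?thesis using n0 q by (simp add: v sum_subtractf scaleR_diff_right)
  qed
  hence "norm (v - t) = (1 / real (q - f)) * norm (\<Sum>i\<in>I. (ys ! i - t))" using n0 by simp
  also have "\<dots> \<le> (1 / real (q - f)) * (\<Sum>i\<in>I. norm (ys ! i - t))"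
    using n0 by (intro mult_left_mono norm_sum) auto
  also have "\<dots> \<le> (1 / real (q - f)) * (\<Sum>i\<in>I. D)"
    using n0 close by (intro mult_left_mono sum_mono) auto
  also have "\<dots> = D" using I(2) n0 by simp
  finally show ?thesis using tT by blast
qed

lemma cd_cong: "(\<And>k. k < h \<Longrightarrow> v k = v' k) \<Longrightarrow> coord_diam h v i = coord_diam h v' i"
  unfolding coord_diam_def cd_set_eq by (intro arg_cong[where f=Max] image_cong) auto

lemma cmin_cong: "(\<And>k. k < h \<Longrightarrow> v k = v' k) \<Longrightarrow> cmin h v i = cmin h v' i"
  unfolding cmin_def by (rule arg_cong[where f=Min]) auto
lemma cmax_cong: "(\<And>k. k < h \<Longrightarrow> v k = v' k) \<Longrightarrow> cmax h v i = cmax h v' i"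
  unfolding cmax_def by (rule arg_cong[where f=Max]) auto

definition goodb :: "nat \<Rightarrow> (nat \<Rightarrow> real ^ 'd) \<Rightarrow> 'd \<Rightarrow> (nat \<Rightarrow> nat set) \<Rightarrow> bool" where
  "goodb h v i s = ((\<forall>j\<in>{..<h}. \<forall>k\<in>{..<h}. k \<in> s j \<longrightarrow> 2 * (v k $ i) \<le> cmin h v i + cmax h v i) \<or>
                   (\<forall>j\<in>{..<h}. \<forall>k\<in>{..<h}. k \<in> s j \<longrightarrow> 2 * (v k $ i) \<ge> cmin h v i + cmax h v i))"

lemma good_goodb:
  assumes "s \<in> deliv_S h q f" "\<And>k. k < h \<Longrightarrow> v k = v' k"
  shows "good h v i s = goodb h v' i s"
proof -
  have sub: "\<And>j k. j < h \<Longrightarrow> k \<in> s j \<Longrightarrow> k < h" using card_deliv(1)[OF assms(1)] by blast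
  have eqv: "(\<forall>k\<in>s j. P (v k $ i)) = (\<forall>k\<in>{..<h}. k \<in> s j \<longrightarrow> P (v' k $ i))" if "j < h" for j P
    using sub[OF that] assms(2) by auto
  have mn: "cmin h v i = cmin h v' i" by (rule cmin_cong[OF assms(2)])
  have mx: "cmax h v i = cmax h v' i" by (rule cmax_cong[OF assms(2)])
  have e1: "(\<forall>j\<in>{..<h}. \<forall>k\<in>s j. 2 * (v k $ i) \<le> cmin h v' i + cmax h v' i) =
     (\<forall>j\<in>{..<h}. \<forall>k\<in>{..<h}. k \<in> s j \<longrightarrow> 2 * (v' k $ i) \<le> cmin h v' i + cmax h v' i)"
    by (rule ball_cong[OF refl], rule eqv, simp)
  have e2: "(\<forall>j\<in>{..<h}. \<forall>k\<in>s j. 2 * (v k $ i) \<ge> cmin h v' i + cmax h v' i) =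
     (\<forall>j\<in>{..<h}. \<forall>k\<in>{..<h}. k \<in> s j \<longrightarrow> 2 * (v' k $ i) \<ge> cmin h v' i + cmax h v' i)"
    by (rule ball_cong[OF refl], rule eqv, simp)
  show ?thesis unfolding good_def goodb_def mn mx e1 e2 ..
qed

lemma lam_diam:
  fixes \<theta> GG :: "nat \<Rightarrow> real ^ 'd"
  assumes h: "0 < h" and eta: "\<eta> \<ge> 0"
  shows "coord_diam h (\<lambda>k. \<theta> k - \<eta> *\<^sub>R GG k) i \<le> coord_diam h \<theta> i + \<eta> * coord_diam h GG i"
proof (rule cd_le[OF h])
  fix j k assume jk: "j < h" "k < h"
  have "\<bar>(\<theta> j - \<eta> *\<^sub>R GG j) $ i - (\<theta> k - \<eta> *\<^sub>R GG k) $ i\<bar> \<le> \<bar>\<theta> j $ i - \<theta> k $ i\<bar> + \<eta> * \<bar>GG j $ i - GG k $ i\<bar>"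
  proof -
    have eq: "(\<theta> j - \<eta> *\<^sub>R GG j) $ i - (\<theta> k - \<eta> *\<^sub>R GG k) $ i = (\<theta> j $ i - \<theta> k $ i) - \<eta> * (GG j $ i - GG k $ i)"
      by (simp add: algebra_simps)
    show ?thesis unfolding eq using eta abs_triangle_ineq4[of "\<theta> j $ i - \<theta> k $ i" "\<eta> * (GG j $ i - GG k $ i)"]
      by (simp add: abs_mult)
  qed
  also have "\<dots> \<le> coord_diam h \<theta> i + \<eta> * coord_diam h GG i"
    using jk eta by (intro add_mono mult_left_mono cd_ge) auto
  finally show "\<bar>(\<theta> j - \<eta> *\<^sub>R GG j) $ i - (\<theta> k - \<eta> *\<^sub>R GG k) $ i\<bar> \<le> coord_diam h \<theta> i + \<eta> * coord_diam h GG i" .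
qed

lemma G_diam:
  fixes GG gg :: "nat \<Rightarrow> real ^ 'd"
  assumes h: "0 < h"
    and close: "\<And>j. j < h \<Longrightarrow> \<exists>t\<in>gg ` {..<hw}. norm (GG j - t) \<le> D"
    and spread: "\<And>r s. r < hw \<Longrightarrow> s < hw \<Longrightarrow> norm (gg r - gg s) \<le> D"
  shows "Delta h GG \<le> 3 * real CARD('d) * D"
proof -
  have "coord_diam h GG i \<le> 3 * D" for i
  proof (rule cd_le[OF h])
    fix j k assume jk: "j < h" "k < h"
    obtain r where r: "r < hw" "norm (GG j - gg r) \<le> D" using close[OF jk(1)] by auto
    obtain s where s: "s < hw" "norm (GG k - gg s) \<le> D" using close[OF jk(2)] by auto
    have "\<bar>GG j $ i - GG k $ i\<bar> \<le> norm (GG j - GG k)"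
      by (metis component_le_norm_cart vector_minus_component)
    also have "\<dots> \<le> norm (GG j - gg r) + norm (gg r - gg s) + norm (gg s - GG k)"
    proof -
      have "GG j - GG k = (GG j - gg r) + ((gg r - gg s) + (gg s - GG k))" by simp
      hence "norm (GG j - GG k) \<le> norm (GG j - gg r) + norm ((gg r - gg s) + (gg s - GG k))"
        by (metis norm_triangle_ineq)
      also have "\<dots> \<le> norm (GG j - gg r) + (norm (gg r - gg s) + norm (gg s - GG k))"
        by (intro add_left_mono norm_triangle_ineq)
      finally show ?thesis by simp
    qed
    also have "\<dots> \<le> 3 * D" using r s spread[OF r(1) s(1)] by (simp add: norm_minus_commute)
    finally show "\<bar>GG j $ i - GG k $ i\<bar> \<le> 3 * D" .
  qed
  hence "Delta h GG \<le> (\<Sum>i\<in>(UNIV::'d set). 3 * D)" unfolding Delta_def by (intro sum_mono) auto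
  thus ?thesis by simp
qed

lemma x_dist:
  fixes \<theta> :: "nat \<Rightarrow> real ^ 'd" and a b :: "real ^ 'd"
  assumes "\<And>i. cmin h \<theta> i \<le> a $ i \<and> a $ i \<le> cmax h \<theta> i"
    and "\<And>i. cmin h \<theta> i \<le> b $ i \<and> b $ i \<le> cmax h \<theta> i" and h: "0 < h"
  shows "norm (a - b) \<le> Delta h \<theta>"
proof -
  have "norm (a - b) \<le> (\<Sum>i\<in>UNIV. \<bar>(a - b) $ i\<bar>)" by (rule norm_le_l1_cart)
  also have "\<dots> \<le> (\<Sum>i\<in>UNIV. coord_diam h \<theta> i)"
    unfolding cd_eq[OF h]
  proof (intro sum_mono)
    fix i
    show "\<bar>(a - b) $ i\<bar> \<le> cmax h \<theta> i - cmin h \<theta> i" using assms(1)[of i] assms(2)[of i]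
      by (simp add: abs_le_iff)
  qed
  finally show ?thesis unfolding Delta_def .
qed

lemma indep_integral:
  fixes X :: "'w \<Rightarrow> 'x" and F :: "'w \<Rightarrow> 'n" and H :: "'n \<Rightarrow> real"
  assumes P: "prob_space M"
    and ind: "prob_space.indep_set M {X -` U \<inter> space M | U. True} {F -` W \<inter> space M | W. W \<in> sets N}"
    and Xm: "X \<in> measurable M (count_space UNIV)"
    and Fm: "F \<in> measurable M N" and Hm: "H \<in> borel_measurable N"
    and int: "integrable M (\<lambda>w. H (F w))"
  shows "(\<integral>w. indicator {w\<in>space M. X w = s} w * H (F w) \<partial>M) = measure M {w\<in>space M. X w = s} * (\<integral>w. H (F w) \<partial>M)"
proof -
  interpret prob_space M by (rule P)
  define E where "E = {w\<in>space M. X w = s}"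
  have E: "E \<in> sets M" unfolding E_def using Xm by measurable
  have HF: "(\<lambda>w. H (F w)) \<in> borel_measurable M" using Fm Hm by measurable
  have iv: "indep_var borel (indicator E) borel (\<lambda>w. H (F w))"
    unfolding indep_var_def indep_vars_def2
  proof (intro conjI ballI)
    fix i :: bool
    show "random_variable (case_bool borel borel i) (case_bool (indicator E :: _ \<Rightarrow> real) (\<lambda>w. H (F w)) i)"
      using E HF by (cases i) auto
  next
    show "indep_sets (\<lambda>i. {case_bool (indicator E :: _ \<Rightarrow> real) (\<lambda>w. H (F w)) i -` A \<inter> space M |A. A \<in> sets (case_bool borel borel i)}) UNIV"
    proof (rule indep_sets_mono_sets[OF ind[unfolded indep_set_def]])
      fix i :: bool
      show "{case_bool (indicator E :: _ \<Rightarrow> real) (\<lambda>w. H (F w)) i -` A \<inter> space M |A. A \<in> sets (case_bool borel borel i)}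
            \<subseteq> case_bool {X -` U \<inter> space M | U. True} {F -` W \<inter> space M | W. W \<in> sets N} i"
      proof (cases i)
        case True
        have pre: "\<exists>U. indicator E -` A \<inter> space M = X -` U \<inter> space M" for A :: "real set"
        proof -
          have "indicator E -` A \<inter> space M = X -` {x. (if x = s then 1 else 0) \<in> A} \<inter> space M"
            unfolding E_def by (auto simp: indicator_def)
          thus ?thesis by blast
        qed
        show ?thesis using True pre by auto
      next
        case False
        have "{(\<lambda>w. H (F w)) -` A \<inter> space M |A. A \<in> sets borel} \<subseteq> {F -` W \<inter> space M |W. W \<in> sets N}"
        proof
          fix Z assume "Z \<in> {(\<lambda>w. H (F w)) -` A \<inter> space M |A. A \<in> sets borel}"
          then obtain A where A: "A \<in> sets (borel :: real measure)" "Z = (\<lambda>w. H (F w)) -` A \<inter> space M" by blast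
          have "Z = F -` (H -` A \<inter> space N) \<inter> space M"
            using measurable_space[OF Fm] A(2) by auto
          moreover have "H -` A \<inter> space N \<in> sets N" using measurable_sets[OF Hm A(1)] .
          ultimately show "Z \<in> {F -` W \<inter> space M |W. W \<in> sets N}" by blast
        qed
        thus ?thesis using False by simp
      qed
    qed
  qed
  have "(\<integral>w. indicator E w * H (F w) \<partial>M) = (\<integral>w. indicator E w \<partial>M) * (\<integral>w. H (F w) \<partial>M)"
    by (rule indep_var_lebesgue_integral[OF iv]) (use E int in \<open>auto intro!: integrable_real_indicator simp: less_top[symmetric]\<close>)
  also have "(\<integral>w. indicator E w \<partial>M) = measure M E" using E by (simp add: sets.Int_space_eq2)
  finally show ?thesis unfolding E_def .
qed

lemma comp_meas:
  fixes \<theta> :: "nat \<Rightarrow> real ^ 'd"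
  assumes "k \<in> I"
  shows "(\<lambda>x. (\<theta> k - \<eta> *\<^sub>R x k) $ i) \<in> borel_measurable (PiM I (\<lambda>_. borel :: (real ^ 'd) measure))"
proof -
  have c: "(\<lambda>v. (\<theta> k - \<eta> *\<^sub>R v) $ i) \<in> borel_measurable (borel :: (real ^ 'd) measure)"
    by (intro borel_measurable_continuous_onI continuous_intros)
  have "(\<lambda>x. x k) \<in> measurable (PiM I (\<lambda>_. borel :: (real ^ 'd) measure)) borel"
    using assms by (rule measurable_component_singleton)
  from measurable_compose[OF this c] show ?thesis by simp
qed

declare comp_meas[measurable]

lemma meas_test:
  fixes \<theta> :: "nat \<Rightarrow> real ^ 'd"
  shows "(\<lambda>b. cmax hps (\<lambda>k. \<theta> k - \<eta> *\<^sub>R b k) i) \<in> borel_measurable (PiM {..<hps} (\<lambda>_. borel :: (real ^ 'd) measure))"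
  unfolding cmax_def by measurable

lemma pred_aux1:
  fixes \<theta> :: "nat \<Rightarrow> real ^ 'd"
  assumes "k \<in> I" "finite I"
  shows "Measurable.pred (PiM I (\<lambda>_. borel :: (real ^ 'd) measure)) (\<lambda>x. 2 * (\<theta> k - \<eta> *\<^sub>R x k) $ i \<le> Min ((\<lambda>k. (\<theta> k - \<eta> *\<^sub>R x k) $ i) ` I) + Max ((\<lambda>k. (\<theta> k - \<eta> *\<^sub>R x k) $ i) ` I))"
proof -
  note [measurable] = comp_meas[OF assms(1), of \<theta> \<eta> i]
  have f: "(\<lambda>x. 2 * (\<theta> k - \<eta> *\<^sub>R x k) $ i) \<in> borel_measurable (PiM I (\<lambda>_. borel :: (real ^ 'd) measure))"
    by (intro borel_measurable_times borel_measurable_const comp_meas assms(1))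
  have g: "(\<lambda>x. Min ((\<lambda>k. (\<theta> k - \<eta> *\<^sub>R x k) $ i) ` I) + Max ((\<lambda>k. (\<theta> k - \<eta> *\<^sub>R x k) $ i) ` I)) \<in> borel_measurable (PiM I (\<lambda>_. borel :: (real ^ 'd) measure))"
    by (intro borel_measurable_add borel_measurable_Min borel_measurable_Max comp_meas assms(2))
  show ?thesis unfolding Measurable.pred_def by (rule borel_measurable_le[OF f g])
qed
lemma pred_aux2:
  fixes \<theta> :: "nat \<Rightarrow> real ^ 'd"
  assumes "k \<in> I" "finite I"
  shows "Measurable.pred (PiM I (\<lambda>_. borel :: (real ^ 'd) measure)) (\<lambda>x. 2 * (\<theta> k - \<eta> *\<^sub>R x k) $ i \<ge> Min ((\<lambda>k. (\<theta> k - \<eta> *\<^sub>R x k) $ i) ` I) + Max ((\<lambda>k. (\<theta> k - \<eta> *\<^sub>R x k) $ i) ` I))"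
proof -
  note [measurable] = comp_meas[OF assms(1), of \<theta> \<eta> i]
  have f: "(\<lambda>x. 2 * (\<theta> k - \<eta> *\<^sub>R x k) $ i) \<in> borel_measurable (PiM I (\<lambda>_. borel :: (real ^ 'd) measure))"
    by (intro borel_measurable_times borel_measurable_const comp_meas assms(1))
  have g: "(\<lambda>x. Min ((\<lambda>k. (\<theta> k - \<eta> *\<^sub>R x k) $ i) ` I) + Max ((\<lambda>k. (\<theta> k - \<eta> *\<^sub>R x k) $ i) ` I)) \<in> borel_measurable (PiM I (\<lambda>_. borel :: (real ^ 'd) measure))"
    by (intro borel_measurable_add borel_measurable_Min borel_measurable_Max comp_meas assms(2))
  show ?thesis unfolding Measurable.pred_def by (rule borel_measurable_le[OF g f])
qed

lemma pred_goodb: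
  fixes \<theta> :: "nat \<Rightarrow> real ^ 'd"
  shows "Measurable.pred (PiM {..<hps} (\<lambda>_. borel :: (real ^ 'd) measure)) (\<lambda>b. goodb hps (\<lambda>k. \<theta> k - \<eta> *\<^sub>R b k) i s)"
  unfolding goodb_def cmin_def cmax_def
  by (intro pred_intros_logic pred_intros_finite pred_intros_imp' pred_aux1 pred_aux2 finite_lessThan; assumption)

lemma meas_Rb:
  fixes \<theta> :: "nat \<Rightarrow> real ^ 'd"
  shows "(\<lambda>b. cmax hps (\<lambda>k. \<theta> k - \<eta> *\<^sub>R b k) i - cmin hps (\<lambda>k. \<theta> k - \<eta> *\<^sub>R b k) i)
     \<in> borel_measurable (PiM {..<hps} (\<lambda>_. borel :: (real ^ 'd) measure))"
  unfolding cmin_def cmax_def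
  by (intro borel_measurable_diff borel_measurable_Min borel_measurable_Max comp_meas finite_lessThan; assumption)

lemma meas_Hs:
  fixes \<theta> :: "nat \<Rightarrow> real ^ 'd"
  shows "(\<lambda>b. \<Sum>i\<in>UNIV. if goodb hps (\<lambda>k. \<theta> k - \<eta> *\<^sub>R b k) i s
            then (cmax hps (\<lambda>k. \<theta> k - \<eta> *\<^sub>R b k) i - cmin hps (\<lambda>k. \<theta> k - \<eta> *\<^sub>R b k) i) / 4 else 0)
     \<in> borel_measurable (PiM {..<hps} (\<lambda>_. borel :: (real ^ 'd) measure))"
  by (rule borel_measurable_sum, rule measurable_If[OF borel_measurable_divide[OF meas_Rb borel_measurable_const]
       borel_measurable_const pred_goodb[unfolded Measurable.pred_def]])

theorem mainTheorem11:
  fixes M :: "'w measure"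
    and L :: "real ^ 'd \<Rightarrow> real" and gradL :: "real ^ 'd \<Rightarrow> real ^ 'd"
    and l \<eta> \<sigma>' \<rho> :: real
    and hps hw nps fps qps fw qw :: nat
    and \<theta> :: "nat \<Rightarrow> real ^ 'd" and x :: "nat \<Rightarrow> real ^ 'd"
    and g :: "nat \<Rightarrow> 'w \<Rightarrow> real ^ 'd" and G :: "nat \<Rightarrow> 'w \<Rightarrow> real ^ 'd"
    and X :: "'w \<Rightarrow> (nat \<Rightarrow> nat set)"
    and z :: "nat \<Rightarrow> nat \<Rightarrow> 'w \<Rightarrow> real ^ 'd"
  assumes P: "prob_space M"
    and L_grad: "\<And>y. (L has_derivative (\<lambda>h. gradL y \<bullet> h)) (at y)"
    and L_lip: "l-lipschitz_on UNIV gradL"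
    and eta: "\<eta> > 0"
    and x_box: "\<And>r i. r < hw \<Longrightarrow>
        Min ((\<lambda>k. \<theta> k $ i) ` {..<hps}) \<le> x r $ i \<and> x r $ i \<le> Max ((\<lambda>k. \<theta> k $ i) ` {..<hps})"
    and g_meas: "\<And>r. r < hw \<Longrightarrow> g r \<in> borel_measurable M"
    and g_int: "\<And>r. r < hw \<Longrightarrow> integrable M (\<lambda>w. norm (g r w - gradL (x r)))"
    and g_var: "\<And>r. r < hw \<Longrightarrow> (\<integral>w. norm (g r w - gradL (x r)) \<partial>M) \<le> \<sigma>'"
    and fw: "fw \<ge> 1" and qw: "qw \<ge> 2 * fw + 1"
    and G_MDA: "\<And>j w. j < hps \<Longrightarrow> w \<in> space M \<Longrightarrow>
        \<exists>ys. length ys = qw \<and>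
             card {m. m < qw \<and> ys ! m \<in> (\<lambda>r. g r w) ` {..<hw}} \<ge> qw - fw \<and>
             is_MDA fw ys (G j w)"
    and G_meas: "\<And>j. j < hps \<Longrightarrow> G j \<in> borel_measurable M"
    and X_meas: "X \<in> measurable M (count_space UNIV)"
    and X_vals: "\<And>w. w \<in> space M \<Longrightarrow> X w \<in> deliv_S hps qps fps"
    and X_indep: "prob_space.indep_set M
        {X -` U \<inter> space M | U. True}
        {(\<lambda>w. (restrict (\<lambda>r. g r w) {..<hw}, restrict (\<lambda>j. G j w) {..<hps})) -` W \<inter> space M | W.
           W \<in> sets (PiM {..<hw} (\<lambda>_. borel) \<Otimes>\<^sub>M PiM {..<hps} (\<lambda>_. borel))}"
    and rho: "\<rho> > 0"
    and X_prob: "\<And>s. s \<in> deliv_S hps qps fps \<Longrightarrow> measure M {w \<in> space M. X w = s} \<ge> \<rho>"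
    and z_meas: "\<And>j m. z j m \<in> borel_measurable M"
    and fps: "fps \<ge> 1"
    and hps: "hps = nps - fps"
    and qps: "2 * fps + 2 \<le> qps" "qps \<le> hps div 2"
  shows "(\<integral>\<^sup>+ w. ennreal (Delta hps (\<lambda>j.
            vmedian ((\<theta> j - \<eta> *\<^sub>R G j w)
              # map (\<lambda>k. \<theta> k - \<eta> *\<^sub>R G k w) (sorted_list_of_set (X w j))
              @ map (\<lambda>m. z j m w) [0..<qps - 1 - card (X w j)]))) \<partial>M)
         \<le> ennreal ((1 + 3 * real CARD('d) * \<eta> * l - \<rho> / 4) * Delta hps \<theta>
                    + 6 * real CARD('d) * \<eta> * real hw * \<sigma>')"
proof -
  interpret prob_space M by (rule P)
  define d where "d = real CARD('d)"
  define S where "S = deliv_S hps qps fps"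
  have hps0: "0 < hps" using qps by linarith
  have q1: "1 \<le> qps" using qps by linarith
  have l0: "0 \<le> l" using L_lip by (rule lipschitz_on_nonneg)
  define N where "N = (PiM {..<hw} (\<lambda>_. borel) \<Otimes>\<^sub>M PiM {..<hps} (\<lambda>_. borel) :: ((nat \<Rightarrow> real ^ 'd) \<times> (nat \<Rightarrow> real ^ 'd)) measure)"
  define Fm where "Fm w = (restrict (\<lambda>r. g r w) {..<hw}, restrict (\<lambda>j. G j w) {..<hps})" for w
  have Fmeas: "Fm \<in> measurable M N"
    unfolding N_def Fm_def
    by (intro measurable_Pair measurable_restrict) (auto intro: g_meas G_meas)
  define lamb where "lamb b = (\<lambda>k. \<theta> k - \<eta> *\<^sub>R b k)" for b :: "nat \<Rightarrow> real ^ 'd"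
  define RN where "RN p = (\<Sum>i\<in>UNIV. cmax hps (lamb (snd p)) i - cmin hps (lamb (snd p)) i)" for p :: "(nat \<Rightarrow> real ^ 'd) \<times> (nat \<Rightarrow> real ^ 'd)"
  define HN where "HN s p = (\<Sum>i\<in>UNIV. if goodb hps (lamb (snd p)) i s
            then (cmax hps (lamb (snd p)) i - cmin hps (lamb (snd p)) i) / 4 else 0)" for s and p :: "(nat \<Rightarrow> real ^ 'd) \<times> (nat \<Rightarrow> real ^ 'd)"
  have RNm: "RN \<in> borel_measurable N"
    unfolding RN_def lamb_def N_def
    by (rule borel_measurable_sum, rule measurable_compose[OF measurable_snd meas_Rb])
  have HNm: "HN s \<in> borel_measurable N" for s
    unfolding HN_def lamb_def N_def
    by (rule measurable_compose[OF measurable_snd meas_Hs])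
  define lamw where "lamw w = (\<lambda>k. \<theta> k - \<eta> *\<^sub>R G k w)" for w
  have lam_eq: "lamb (snd (Fm w)) k = lamw w k" if "k < hps" for w k
    using that unfolding lamb_def lamw_def Fm_def by simp
  define Rw where "Rw w = RN (Fm w)" for w
  define ell where "ell s w = HN s (Fm w)" for s w
  have Rw_eq: "Rw w = Delta hps (lamw w)" for w
    unfolding Rw_def RN_def Delta_def cd_eq[OF hps0]
    using cmin_cong[of hps "lamb (snd (Fm w))" "lamw w"] cmax_cong[of hps "lamb (snd (Fm w))" "lamw w"] lam_eq
    by simp
  have ell_eq: "ell s w = (\<Sum>i\<in>UNIV. if good hps (lamw w) i s then coord_diam hps (lamw w) i / 4 else 0)"
    if "s \<in> S" for s w
  proof -
    have c1: "cmin hps (lamb (snd (Fm w))) i = cmin hps (lamw w) i" for i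
      by (rule cmin_cong) (simp add: lam_eq)
    have c2: "cmax hps (lamb (snd (Fm w))) i = cmax hps (lamw w) i" for i
      by (rule cmax_cong) (simp add: lam_eq)
    have c3: "goodb hps (lamb (snd (Fm w))) i s = good hps (lamw w) i s" for i
      by (rule good_goodb[OF that[unfolded S_def], symmetric]) (simp add: lam_eq)
    show ?thesis unfolding ell_def HN_def cd_eq[OF hps0] c1 c2 c3 ..
  qed
  have cmm: "cmin hps v i \<le> cmax hps v i" for v i
    using cmin_le[OF hps0, of v i] cmax_ge[OF hps0, of v i] by simp
  have HN_bounds: "0 \<le> HN s p" "HN s p \<le> RN p / 4" for s p
  proof -
    show "0 \<le> HN s p" unfolding HN_def using cmm by (intro sum_nonneg) auto
    have "HN s p \<le> (\<Sum>i\<in>UNIV. (cmax hps (lamb (snd p)) i - cmin hps (lamb (snd p)) i) / 4)"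
      unfolding HN_def using cmm by (intro sum_mono) auto
    also have "\<dots> = RN p / 4" unfolding RN_def by (simp add: sum_divide_distrib)
    finally show "HN s p \<le> RN p / 4" .
  qed
  have RN_nonneg: "0 \<le> RN p" for p unfolding RN_def using cmm by (intro sum_nonneg) auto
  have P1: "Delta hps (\<lambda>j. vmedian ((\<theta> j - \<eta> *\<^sub>R G j w)
              # map (\<lambda>k. \<theta> k - \<eta> *\<^sub>R G k w) (sorted_list_of_set (X w j))
              @ map (\<lambda>m. z j m w) [0..<qps - 1 - card (X w j)])) \<le> Rw w - ell (X w) w"
    if w: "w \<in> space M" for w
  proof -
    have XS: "X w \<in> S" using X_vals[OF w] unfolding S_def .
    have cc: "coord_diam hps (\<lambda>j. vmedian (lamw w j # map (lamw w) (sorted_list_of_set (X w j)) @ map (\<lambda>m. z j m w) [0..<qps - 1 - card (X w j)])) i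
          \<le> coord_diam hps (lamw w) i - (if good hps (lamw w) i (X w) then coord_diam hps (lamw w) i / 4 else 0)" for i
      by (rule coord_contract[OF XS[unfolded S_def] qps(1) hps0]) simp
    have "Delta hps (\<lambda>j. vmedian (lamw w j # map (lamw w) (sorted_list_of_set (X w j)) @ map (\<lambda>m. z j m w) [0..<qps - 1 - card (X w j)]))
        \<le> (\<Sum>i\<in>UNIV. coord_diam hps (lamw w) i - (if good hps (lamw w) i (X w) then coord_diam hps (lamw w) i / 4 else 0))"
      unfolding Delta_def by (intro sum_mono cc)
    also have "\<dots> = Rw w - ell (X w) w"
      unfolding Rw_eq ell_eq[OF XS] Delta_def by (simp add: sum_subtractf)
    finally show ?thesis unfolding lamw_def .
  qed
  define e where "e r w = norm (g r w - gradL (x r))" for r w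
  define Esum where "Esum w = (\<Sum>r<hw. e r w)" for w
  define Dw where "Dw w = l * Delta hps \<theta> + 2 * Esum w" for w
  have e_le: "e r w \<le> Esum w" if "r < hw" for r w
    unfolding Esum_def using that by (intro member_le_sum) (auto simp: e_def)
  have xb: "cmin hps \<theta> i \<le> x r $ i \<and> x r $ i \<le> cmax hps \<theta> i" if "r < hw" for r i
    using x_box[OF that] unfolding cmin_def cmax_def .
  have spread: "norm (g r w - g s w) \<le> Dw w" if "r < hw" "s < hw" for r s w
  proof -
    have xd: "norm (x r - x s) \<le> Delta hps \<theta>"
      by (rule x_dist[OF _ _ hps0]) (use xb that in auto)
    have lip: "norm (gradL (x r) - gradL (x s)) \<le> l * Delta hps \<theta>"
    proof -
      have "norm (gradL (x r) - gradL (x s)) \<le> l * norm (x r - x s)"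
        using lipschitz_onD[OF L_lip, of "x r" "x s"] by (simp add: dist_norm)
      also have "\<dots> \<le> l * Delta hps \<theta>" using xd l0 by (rule mult_left_mono)
      finally show ?thesis .
    qed
    have "g r w - g s w = (g r w - gradL (x r)) + ((gradL (x r) - gradL (x s)) + (gradL (x s) - g s w))" by simp
    hence "norm (g r w - g s w) \<le> norm (g r w - gradL (x r)) + norm ((gradL (x r) - gradL (x s)) + (gradL (x s) - g s w))"
      by (metis norm_triangle_ineq)
    also have "\<dots> \<le> norm (g r w - gradL (x r)) + (norm (gradL (x r) - gradL (x s)) + norm (gradL (x s) - g s w))"
      by (intro add_left_mono norm_triangle_ineq)
    also have "\<dots> \<le> Esum w + (l * Delta hps \<theta> + Esum w)"
      using e_le[OF that(1), of w] e_le[OF that(2), of w] lip unfolding e_def by (simp add: norm_minus_commute)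
    finally show ?thesis unfolding Dw_def by simp
  qed
  have P2: "Rw w \<le> Delta hps \<theta> + \<eta> * (3 * d * Dw w)" if w: "w \<in> space M" for w
  proof -
    have close: "\<exists>t\<in>(\<lambda>r. g r w) ` {..<hw}. norm (G j w - t) \<le> Dw w" if j: "j < hps" for j
    proof -
      obtain ys where ys: "length ys = qw" "card {m. m < qw \<and> ys ! m \<in> (\<lambda>r. g r w) ` {..<hw}} \<ge> qw - fw"
        "is_MDA fw ys (G j w)" using G_MDA[OF j w] by blast
      show ?thesis by (rule mda_close[OF ys(3) ys(1) qw ys(2)]) (use spread in auto)
    qed
    have "Rw w = (\<Sum>i\<in>UNIV. coord_diam hps (lamw w) i)" unfolding Rw_eq Delta_def ..
    also have "\<dots> \<le> (\<Sum>i\<in>UNIV. coord_diam hps \<theta> i + \<eta> * coord_diam hps (\<lambda>j. G j w) i)"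
      unfolding lamw_def using eta by (intro sum_mono lam_diam[OF hps0]) auto
    also have "\<dots> = Delta hps \<theta> + \<eta> * Delta hps (\<lambda>j. G j w)"
      unfolding Delta_def by (simp add: sum.distrib sum_distrib_left)
    also have "\<dots> \<le> Delta hps \<theta> + \<eta> * (3 * d * Dw w)"
      unfolding d_def using eta G_diam[OF hps0 close spread] by (intro add_left_mono mult_left_mono) auto
    finally show ?thesis .
  qed
  have finS: "finite S"
    unfolding S_def deliv_S_def deliv_S_j_def
    by (intro finite_PiE) (auto intro: finite_subset[of _ "Pow {..<hps}"])
  have P3: "Rw w / 4 \<le> (\<Sum>s\<in>S. ell s w)" for w
  proof -
    define t where "t s i = (if good hps (lamw w) i s then coord_diam hps (lamw w) i / 4 else 0)" for s i
    have t0: "0 \<le> t s i" for s i unfolding t_def using cd_nonneg[OF hps0] by auto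
    have "(\<Sum>s\<in>S. ell s w) = (\<Sum>s\<in>S. \<Sum>i\<in>UNIV. t s i)"
      by (intro sum.cong refl) (simp add: ell_eq t_def)
    also have "\<dots> = (\<Sum>i\<in>UNIV. \<Sum>s\<in>S. t s i)" by (rule sum.swap)
    also have "\<dots> \<ge> (\<Sum>i\<in>UNIV. coord_diam hps (lamw w) i / 4)"
    proof (intro sum_mono)
      fix i
      obtain si where si: "si \<in> S" "good hps (lamw w) i si"
        using good_exists[OF q1 qps(2), of fps "lamw w" i] unfolding S_def by blast
      have "coord_diam hps (lamw w) i / 4 = t si i" unfolding t_def using si by simp
      also have "\<dots> \<le> (\<Sum>s\<in>S. t s i)" using si finS t0 by (intro member_le_sum) auto
      finally show "coord_diam hps (lamw w) i / 4 \<le> (\<Sum>s\<in>S. t s i)" .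
    qed
    finally show ?thesis unfolding Rw_eq Delta_def by (simp add: sum_divide_distrib)
  qed
  have e_int: "integrable M (e r)" if "r < hw" for r unfolding e_def using g_int[OF that] .
  have Esum_int: "integrable M Esum" unfolding Esum_def by (auto intro!: integrable_sum e_int)
  define B where "B w = Delta hps \<theta> + \<eta> * (3 * d * Dw w)" for w
  have B_int: "integrable M B" unfolding B_def Dw_def using Esum_int by simp
  have Rw_meas: "Rw \<in> borel_measurable M" unfolding Rw_def using measurable_compose[OF Fmeas RNm] .
  have Rw_nonneg: "0 \<le> Rw w" for w unfolding Rw_def by (rule RN_nonneg)
  have Rw_int: "integrable M Rw"
  proof (rule Bochner_Integration.integrable_bound[OF B_int Rw_meas])
    show "AE w in M. norm (Rw w) \<le> norm (B w)"
      using P2 Rw_nonneg unfolding B_def by (intro AE_I2) (smt (verit) real_norm_def)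
  qed
  have ell_meas: "ell s \<in> borel_measurable M" for s unfolding ell_def using measurable_compose[OF Fmeas HNm] .
  have ell_nonneg: "0 \<le> ell s w" for s w unfolding ell_def by (rule HN_bounds)
  have ell_le: "ell s w \<le> Rw w / 4" for s w unfolding ell_def Rw_def by (rule HN_bounds)
  have ell_int: "integrable M (ell s)" for s
  proof (rule Bochner_Integration.integrable_bound[OF Rw_int ell_meas])
    show "AE w in M. norm (ell s w) \<le> norm (Rw w)"
    proof (intro AE_I2)
      fix w show "norm (ell s w) \<le> norm (Rw w)"
        using ell_nonneg[of s w] ell_le[of s w] Rw_nonneg[of w] by simp
    qed
  qed
  define E where "E s = {w\<in>space M. X w = s}" for s
  have E_sets: "E s \<in> sets M" for s unfolding E_def using X_meas by measurable
  have Iell_int: "integrable M (\<lambda>w. indicator (E s) w * ell s w)" for s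
    using integrable_real_mult_indicator[OF E_sets ell_int, of s s] by (simp add: mult.commute)
  define J where "J w = (\<Sum>s\<in>S. indicator (E s) w * ell s w)" for w
  have J_eq: "J w = ell (X w) w" if w: "w \<in> space M" for w
  proof -
    have "J w = (\<Sum>s\<in>S. if X w = s then ell s w else 0)"
      unfolding J_def E_def using w by (intro sum.cong) (auto simp: indicator_def)
    also have "\<dots> = ell (X w) w" using finS X_vals[OF w] unfolding S_def by (simp add: sum.delta)
    finally show ?thesis .
  qed
  define h where "h w = Rw w - J w" for w
  have h_int: "integrable M h" unfolding h_def J_def using Rw_int Iell_int by auto
  have ind: "indep_set {X -` U \<inter> space M | U. True} {Fm -` W \<inter> space M | W. W \<in> sets N}"
    using X_indep unfolding Fm_def[abs_def] N_def .
  have indI: "(\<integral>w. indicator (E s) w * ell s w \<partial>M) = measure M (E s) * (\<integral>w. ell s w \<partial>M)" for s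
    using indep_integral[OF P ind X_meas Fmeas HNm, of s s] ell_int[of s]
    unfolding E_def ell_def by simp
  have Dth0: "0 \<le> Delta hps \<theta>" unfolding Delta_def using cd_nonneg[OF hps0] by (intro sum_nonneg) auto
  have hws: "0 \<le> real hw * \<sigma>'"
  proof (cases "hw = 0")
    case False
    hence "0 \<le> (\<integral>w. e 0 w \<partial>M)" by (intro integral_nonneg_AE) (auto simp: e_def)
    also have "\<dots> \<le> \<sigma>'" using g_var[of 0] False unfolding e_def by simp
    finally show ?thesis by simp
  qed simp
  have rho1: "\<rho> \<le> 1"
  proof -
    obtain w0 where w0: "w0 \<in> space M" using not_empty by blast
    have "\<rho> \<le> measure M {w \<in> space M. X w = X w0}" using X_prob[OF X_vals[OF w0]] .
    also have "\<dots> \<le> 1" by (rule prob_le_1)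
    finally show ?thesis .
  qed
  define I where "I = (\<integral>w. Rw w \<partial>M)"
  have int_h: "(\<integral>w. h w \<partial>M) = I - (\<Sum>s\<in>S. measure M (E s) * (\<integral>w. ell s w \<partial>M))"
  proof -
    have "(\<integral>w. h w \<partial>M) = I - (\<integral>w. J w \<partial>M)"
      unfolding h_def I_def J_def by (intro Bochner_Integration.integral_diff Rw_int) (auto intro!: Bochner_Integration.integrable_sum Iell_int)
    also have "(\<integral>w. J w \<partial>M) = (\<Sum>s\<in>S. (\<integral>w. indicator (E s) w * ell s w \<partial>M))"
      unfolding J_def by (rule Bochner_Integration.integral_sum) (rule Iell_int)
    finally show ?thesis using indI by simp
  qed
  have lowJ: "\<rho> / 4 * I \<le> (\<Sum>s\<in>S. measure M (E s) * (\<integral>w. ell s w \<partial>M))"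
  proof -
    have "\<rho> / 4 * I = \<rho> * (\<integral>w. Rw w / 4 \<partial>M)" unfolding I_def by simp
    also have "\<dots> \<le> \<rho> * (\<integral>w. (\<Sum>s\<in>S. ell s w) \<partial>M)"
      using rho P3 Rw_int ell_int by (intro mult_left_mono Bochner_Integration.integral_mono) auto
    also have "\<dots> = \<rho> * (\<Sum>s\<in>S. (\<integral>w. ell s w \<partial>M))"
      by (subst Bochner_Integration.integral_sum) (auto intro: ell_int)
    also have "\<dots> = (\<Sum>s\<in>S. \<rho> * (\<integral>w. ell s w \<partial>M))" by (simp add: sum_distrib_left)
    also have "\<dots> \<le> (\<Sum>s\<in>S. measure M (E s) * (\<integral>w. ell s w \<partial>M))"
    proof (intro sum_mono mult_right_mono)
      fix s assume "s \<in> S"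
      thus "\<rho> \<le> measure M (E s)" using X_prob unfolding E_def S_def by blast
      show "0 \<le> (\<integral>w. ell s w \<partial>M)" using ell_nonneg by (intro integral_nonneg_AE) auto
    qed
    finally show ?thesis .
  qed
  have IB: "I \<le> Delta hps \<theta> + \<eta> * (3 * d * (l * Delta hps \<theta> + 2 * (real hw * \<sigma>')))"
  proof -
    have "I \<le> (\<integral>w. B w \<partial>M)" unfolding I_def using Rw_int B_int P2 unfolding B_def
      by (intro Bochner_Integration.integral_mono) auto
    also have "(\<integral>w. B w \<partial>M) = Delta hps \<theta> + \<eta> * (3 * d * (l * Delta hps \<theta> + 2 * (\<integral>w. Esum w \<partial>M)))"
      unfolding B_def Dw_def using Esum_int by (simp add: prob_space)
    also have "(\<integral>w. Esum w \<partial>M) \<le> real hw * \<sigma>'"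
    proof -
      have "(\<integral>w. Esum w \<partial>M) = (\<Sum>r<hw. (\<integral>w. e r w \<partial>M))"
        unfolding Esum_def by (rule Bochner_Integration.integral_sum) (auto intro: e_int)
      also have "\<dots> \<le> (\<Sum>r<hw. \<sigma>')" using g_var unfolding e_def by (intro sum_mono) auto
      finally show ?thesis by simp
    qed
    hence "Delta hps \<theta> + \<eta> * (3 * d * (l * Delta hps \<theta> + 2 * (\<integral>w. Esum w \<partial>M)))
        \<le> Delta hps \<theta> + \<eta> * (3 * d * (l * Delta hps \<theta> + 2 * (real hw * \<sigma>')))"
      using eta unfolding d_def by (intro add_left_mono mult_left_mono) auto
    finally show ?thesis .
  qed
  define K where "K = 3 * d * (l * Delta hps \<theta> + 2 * (real hw * \<sigma>'))"
  have K0: "0 \<le> K" unfolding K_def d_def using l0 Dth0 hws by simp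
  have real_bound: "(\<integral>w. h w \<partial>M) \<le> (1 + 3 * real CARD('d) * \<eta> * l - \<rho> / 4) * Delta hps \<theta>
                    + 6 * real CARD('d) * \<eta> * real hw * \<sigma>'"
  proof -
    have "(\<integral>w. h w \<partial>M) \<le> (1 - \<rho>/4) * I" using int_h lowJ by (simp add: algebra_simps)
    also have "\<dots> \<le> (1 - \<rho>/4) * (Delta hps \<theta> + \<eta> * K)"
      using IB rho1 unfolding K_def by (intro mult_left_mono) auto
    also have "\<dots> \<le> (1 - \<rho>/4) * Delta hps \<theta> + \<eta> * K"
    proof -
      have "0 \<le> \<rho>/4 * (\<eta> * K)" using rho eta K0 by simp
      thus ?thesis by (simp add: algebra_simps)
    qed
    also have "\<dots> = (1 + 3 * real CARD('d) * \<eta> * l - \<rho> / 4) * Delta hps \<theta> + 6 * real CARD('d) * \<eta> * real hw * \<sigma>'"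
      unfolding K_def d_def by (simp add: algebra_simps)
    finally show ?thesis .
  qed
  have h_nonneg: "0 \<le> h w" if "w \<in> space M" for w
    unfolding h_def J_eq[OF that] using ell_le[of "X w" w] Rw_nonneg[of w] by simp
  have "(\<integral>\<^sup>+ w. ennreal (Delta hps (\<lambda>j.
            vmedian ((\<theta> j - \<eta> *\<^sub>R G j w)
              # map (\<lambda>k. \<theta> k - \<eta> *\<^sub>R G k w) (sorted_list_of_set (X w j))
              @ map (\<lambda>m. z j m w) [0..<qps - 1 - card (X w j)]))) \<partial>M) \<le> (\<integral>\<^sup>+ w. ennreal (h w) \<partial>M)"
    by (rule nn_integral_mono) (use P1 J_eq in \<open>auto simp: h_def intro!: ennreal_leI\<close>)
  also have "(\<integral>\<^sup>+ w. ennreal (h w) \<partial>M) = ennreal (\<integral>w. h w \<partial>M)"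
    by (rule nn_integral_eq_integral[OF h_int]) (use h_nonneg in \<open>auto intro: AE_I2\<close>)
  also have "\<dots> \<le> ennreal ((1 + 3 * real CARD('d) * \<eta> * l - \<rho> / 4) * Delta hps \<theta>
                    + 6 * real CARD('d) * \<eta> * real hw * \<sigma>')"
    by (rule ennreal_leI[OF real_bound])
  finally show ?thesis .
qed

end
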